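(* For every non-empty context $\Gamma$, every formula $A$ and every non-empty context $\Theta$: (i) $\varphi(\Gamma)\le A$ in the Tamari order if and only if $\Gamma\le A$ (with $A$ viewed as a one-element context) in the substitution order; and (ii) $\psi(A)\le\Theta$ in the substitution order if and only if $A\le\varphi(\Theta)$ in the Tamari order. That is, $\psi\dashv\varphi\dashv i$ form an adjoint triple between the poset of formulas and the poset of non-empty contexts, where $i$ sends $A$ to the one-element context $A$.
   Context: Formulas are built from atoms ($p,q,\dots$) by a binary product: every formula is an atom or $A\bullet B$. A context is a finite (possibly empty) list of formulas; commas denote concatenation. The sequent calculus has exactly four rules (no weakening, contraction or exchange): ($\bullet L$) from $A,B,\Delta\vdash C$ infer $A\bullet B,\Delta\vdash C$ (the product must be leftmost); ($\bullet R$) from $\Gamma\vdash A$ and $\Delta\vdash B$ infer $\Gamma,\Delta\vdash A\bullet B$; ($id$) $A\vdash A$; ($cut$) from $\Theta\vdash A$ and $\Gamma,A,\Delta\vdash B$ infer $\Gamma,\Theta,\Delta\vdash B$; derivable means conclusion of a finite derivation tree with no undischarged premises. The Tamari order $\le$ on formulas is the least preorder with $(A\bullet B)\bullet C\le A\bullet(B\bullet C)$ and $A_1\le A_2$, $B_1\le B_2$ implying $A_1\bullet B_1\le A_2\bullet B_2$. The substitution order on contexts is the least relation $\le$ such that: (1) if $\Gamma\vdash A$ is derivable then $\Gamma\le A$ (one-element context); (2) $\cdot\le\cdot$ for the empty context; (3) if $\Gamma_1\le\Gamma_2$ and $\Theta_1\le\Theta_2$ then $(\Gamma_1,\Theta_1)\le(\Gamma_2,\Theta_2)$.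 $\varphi$ is the left-associated product of a non-empty context: $\varphi(A)=A$, $\varphi(\Gamma,A)=\varphi(\Gamma)\bullet A$. $\psi$ is defined by $\psi(p)=p$ for atoms and $\psi(A\bullet B)=\psi(A),B$. *)

theory Defs
  imports Main
begin

datatype 'a fm = Atom 'a | Prod "'a fm" "'a fm"

inductive deriv :: "'a fm list \<Rightarrow> 'a fm \<Rightarrow> bool" where
  prodL: "deriv (A # B # \<Delta>) C \<Longrightarrow> deriv (Prod A B # \<Delta>) C"
| prodR: "deriv \<Gamma> A \<Longrightarrow> deriv \<Delta> B \<Longrightarrow> deriv (\<Gamma> @ \<Delta>) (Prod A B)"
| ident: "deriv [A] A"
| cut: "deriv \<Theta> A \<Longrightarrow> deriv (\<Gamma> @ [A] @ \<Delta>) B \<Longrightarrow> deriv (\<Gamma> @ \<Theta> @ \<Delta>) B"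

inductive tam :: "'a fm \<Rightarrow> 'a fm \<Rightarrow> bool" where
  tam_refl: "tam A A"
| tam_trans: "tam A B \<Longrightarrow> tam B C \<Longrightarrow> tam A C"
| tam_assoc: "tam (Prod (Prod A B) C) (Prod A (Prod B C))"
| tam_mono: "tam A1 A2 \<Longrightarrow> tam B1 B2 \<Longrightarrow> tam (Prod A1 B1) (Prod A2 B2)"

inductive sub_le :: "'a fm list \<Rightarrow> 'a fm list \<Rightarrow> bool" where
  sub_deriv: "deriv \<Gamma> A \<Longrightarrow> sub_le \<Gamma> [A]"
| sub_nil: "sub_le [] []"
| sub_app: "sub_le \<Gamma>1 \<Gamma>2 \<Longrightarrow> sub_le \<Theta>1 \<Theta>2 \<Longrightarrow> sub_le (\<Gamma>1 @ \<Theta>1) (\<Gamma>2 @ \<Theta>2)"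

text \<open>Left-associated product of a non-empty context (unspecified on the empty context).\<close>
fun phi :: "'a fm list \<Rightarrow> 'a fm" where
  "phi (A # \<Gamma>) = foldl Prod A \<Gamma>"

fun psi :: "'a fm \<Rightarrow> 'a fm list" where
  "psi (Atom p) = [Atom p]"
| "psi (Prod A B) = psi A @ [B]"

end

theory Submission
  imports Defs
begin

lemma deriv_ne: "deriv \<Gamma> A \<Longrightarrow> \<Gamma> \<noteq> []"
  by (induction rule: deriv.induct) auto

lemma phi_app: "\<Gamma> \<noteq> [] \<Longrightarrow> phi (\<Gamma> @ \<Delta>) = foldl Prod (phi \<Gamma>) \<Delta>"
  by (cases \<Gamma>) auto

lemma phi_snoc: "\<Gamma> \<noteq> [] \<Longrightarrow> phi (\<Gamma> @ [B]) = Prod (phi \<Gamma>) B"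
  by (simp add: phi_app)

lemma tam_foldl: "tam a b \<Longrightarrow> tam (foldl Prod a xs) (foldl Prod b xs)"
  by (induction xs arbitrary: a b) (auto intro: tam_mono tam_refl)

lemma tam_assocfold: "tam (foldl Prod X (D#Ds)) (Prod X (foldl Prod D Ds))"
proof (induction Ds rule: rev_induct)
  case Nil then show ?case by (simp add: tam_refl)
next
  case (snoc E Ds)
  have "tam (Prod (foldl Prod X (D#Ds)) E) (Prod (Prod X (foldl Prod D Ds)) E)"
    using snoc by (intro tam_mono tam_refl)
  then show ?case using tam_assoc tam_trans by fastforce
qed

lemma tam_phi_split: "\<Gamma> \<noteq> [] \<Longrightarrow> \<Delta> \<noteq> [] \<Longrightarrow> tam (phi (\<Gamma> @ \<Delta>)) (Prod (phi \<Gamma>) (phi \<Delta>))"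
  using tam_assocfold[of "phi \<Gamma>"] by (cases \<Delta>) (auto simp: phi_app)

lemma tam_phi_mid: "tam A A' \<Longrightarrow> tam (phi (\<Gamma> @ [A] @ \<Delta>)) (phi (\<Gamma> @ [A'] @ \<Delta>))"
proof (cases "\<Gamma> = []")
  case True
  assume "tam A A'" then show ?thesis using True by (simp add: tam_foldl)
next
  case False
  assume "tam A A'"
  then show ?thesis using False
    by (simp add: phi_app[of \<Gamma>] del: phi.simps) (intro tam_foldl tam_mono tam_refl)
qed

lemma tam_phi_cut: "\<Theta> \<noteq> [] \<Longrightarrow> tam (phi (\<Gamma> @ \<Theta> @ \<Delta>)) (phi (\<Gamma> @ [phi \<Theta>] @ \<Delta>))"
proof (cases "\<Gamma> = []")
  case True
  assume "\<Theta> \<noteq> []" then show ?thesis using True by (cases \<Theta>) (auto simp: tam_refl)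
next
  case False
  assume ne: "\<Theta> \<noteq> []"
  have "phi (\<Gamma> @ \<Theta> @ \<Delta>) = foldl Prod (phi (\<Gamma> @ \<Theta>)) \<Delta>"
    using False by (metis append.assoc append_is_Nil_conv phi_app)
  moreover have "phi (\<Gamma> @ [phi \<Theta>] @ \<Delta>) = foldl Prod (Prod (phi \<Gamma>) (phi \<Theta>)) \<Delta>"
    using False by (metis append.assoc append_is_Nil_conv phi_app phi_snoc)
  moreover have "tam (phi (\<Gamma> @ \<Theta>)) (Prod (phi \<Gamma>) (phi \<Theta>))"
    using False ne by (rule tam_phi_split)
  ultimately show ?thesis by (simp add: tam_foldl)
qed

lemma deriv_tam: "deriv \<Gamma> A \<Longrightarrow> tam (phi \<Gamma>) A"
proof (induction rule: deriv.induct)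
  case (prodL A B \<Delta> C) then show ?case by simp
next
  case (prodR \<Gamma> A \<Delta> B)
  then have "\<Gamma> \<noteq> []" "\<Delta> \<noteq> []" using deriv_ne by auto
  then have "tam (phi (\<Gamma> @ \<Delta>)) (Prod (phi \<Gamma>) (phi \<Delta>))" by (rule tam_phi_split)
  moreover have "tam (Prod (phi \<Gamma>) (phi \<Delta>)) (Prod A B)" using prodR by (intro tam_mono)
  ultimately show ?case by (rule tam_trans)
next
  case (ident A) then show ?case by (simp add: tam_refl)
next
  case (cut \<Theta> A \<Gamma> \<Delta> B)
  then have "\<Theta> \<noteq> []" using deriv_ne by auto
  then have "tam (phi (\<Gamma> @ \<Theta> @ \<Delta>)) (phi (\<Gamma> @ [phi \<Theta>] @ \<Delta>))" by (rule tam_phi_cut)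
  moreover have "tam (phi (\<Gamma> @ [phi \<Theta>] @ \<Delta>)) (phi (\<Gamma> @ [A] @ \<Delta>))"
    using cut by (intro tam_phi_mid)
  ultimately show ?case using cut tam_trans by metis
qed

lemma cut1: "deriv [A] B \<Longrightarrow> deriv [B] C \<Longrightarrow> deriv [A] C"
  using cut[of "[A]" B "[]" "[]" C] by simp

lemma tam_deriv1: "tam A B \<Longrightarrow> deriv [A] B"
proof (induction rule: tam.induct)
  case (tam_refl A) then show ?case by (rule ident)
next
  case (tam_trans A B C) then show ?case using cut1 by blast
next
  case (tam_assoc A B C)
  have "deriv ([B] @ [C]) (Prod B C)" by (intro prodR ident)
  then have "deriv ([A] @ [B, C]) (Prod A (Prod B C))" by (intro prodR ident) simp
  then have "deriv (A # B # [C]) (Prod A (Prod B C))" by simp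
  then have "deriv (Prod A B # [C]) (Prod A (Prod B C))" by (rule prodL)
  then have "deriv (Prod (Prod A B) C # []) (Prod A (Prod B C))" by (rule prodL)
  then show ?case by simp
next
  case (tam_mono A1 A2 B1 B2)
  then have "deriv ([A1] @ [B1]) (Prod A2 B2)" by (intro prodR)
  then have "deriv (A1 # B1 # []) (Prod A2 B2)" by simp
  then have "deriv (Prod A1 B1 # []) (Prod A2 B2)" by (rule prodL)
  then show ?case by simp
qed

lemma deriv_phi: "\<Gamma> \<noteq> [] \<Longrightarrow> deriv \<Gamma> (phi \<Gamma>)"
proof (induction \<Gamma> rule: rev_induct)
  case Nil then show ?case by simp
next
  case (snoc B \<Gamma>)
  show ?case
  proof (cases "\<Gamma> = []")
    case True then show ?thesis by (simp add: ident)
  next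
    case False
    then have "deriv (\<Gamma> @ [B]) (Prod (phi \<Gamma>) B)" using snoc by (intro prodR ident) auto
    then show ?thesis using False by (simp add: phi_snoc del: phi.simps)
  qed
qed

lemma tam_deriv: "\<Gamma> \<noteq> [] \<Longrightarrow> tam (phi \<Gamma>) A \<Longrightarrow> deriv \<Gamma> A"
  using cut[of \<Gamma> "phi \<Gamma>" "[]" "[]" A] deriv_phi tam_deriv1 by fastforce

lemma sub_subst: "sub_le X Y \<Longrightarrow> deriv (Z @ Y @ W) C \<Longrightarrow> deriv (Z @ X @ W) C"
proof (induction arbitrary: Z W C rule: sub_le.induct)
  case (sub_deriv \<Gamma> A) then show ?case using cut by fastforce
next
  case sub_nil then show ?case by simp
next
  case (sub_app G1 G2 T1 T2)
  have "deriv ((Z @ G2) @ T2 @ W) C" using sub_app.prems by simp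
  then have "deriv ((Z @ G2) @ T1 @ W) C" by (rule sub_app.IH(2))
  then have "deriv (Z @ G2 @ (T1 @ W)) C" by simp
  then have "deriv (Z @ G1 @ (T1 @ W)) C" by (rule sub_app.IH(1))
  then show ?case by simp
qed

lemma sub_le_single: "sub_le X [A] \<Longrightarrow> deriv X A"
  using sub_subst[of X "[A]" "[]" "[]" A] ident[of A] by simp

lemma sub_le_nil: "sub_le X Y \<Longrightarrow> Y = [] \<Longrightarrow> X = []"
  by (induction rule: sub_le.induct) auto

lemma sub_refl: "sub_le X X"
proof (induction X)
  case Nil then show ?case by (rule sub_nil)
next
  case (Cons a X)
  have "sub_le ([a] @ X) ([a] @ X)" by (intro sub_app sub_deriv ident Cons)
  then show ?case by simp
qed

lemma sub_split: "sub_le X Y \<Longrightarrow> Y = Y1 @ Y2 \<Longrightarrow> \<exists>X1 X2. X = X1 @ X2 \<and> sub_le X1 Y1 \<and> sub_le X2 Y2"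
proof (induction arbitrary: Y1 Y2 rule: sub_le.induct)
  case (sub_deriv \<Gamma> A)
  then have "(Y1 = [] \<and> Y2 = [A]) \<or> (Y1 = [A] \<and> Y2 = [])"
    by (cases Y1) auto
  then show ?case
    using sub_le.sub_deriv[OF sub_deriv.hyps] sub_nil by (metis append.left_neutral append_Nil2)
next
  case sub_nil then show ?case using sub_le.sub_nil by auto
next
  case (sub_app G1 G2 T1 T2)
  from sub_app.prems obtain us where
    "(G2 = Y1 @ us \<and> us @ T2 = Y2) \<or> (Y1 = G2 @ us \<and> T2 = us @ Y2)"
    by (auto simp: append_eq_append_conv2)
  then show ?case
  proof
    assume h: "G2 = Y1 @ us \<and> us @ T2 = Y2"
    then obtain X1 X2 where "G1 = X1 @ X2" "sub_le X1 Y1" "sub_le X2 us"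
      using sub_app.IH(1) by blast
    then show ?thesis using h sub_app.hyps(2) sub_le.sub_app
      by (metis append.assoc)
  next
    assume h: "Y1 = G2 @ us \<and> T2 = us @ Y2"
    then obtain X1 X2 where "T1 = X1 @ X2" "sub_le X1 us" "sub_le X2 Y2"
      using sub_app.IH(2) by blast
    then show ?thesis using h sub_app.hyps(1) sub_le.sub_app
      by (metis append.assoc)
  qed
qed

lemma sub_trans: "sub_le Y Z \<Longrightarrow> sub_le X Y \<Longrightarrow> sub_le X Z"
proof (induction arbitrary: X rule: sub_le.induct)
  case (sub_deriv \<Gamma> A)
  then have "deriv X A" using sub_subst[of X \<Gamma> "[]" "[]" A] by simp
  then show ?case by (rule sub_le.sub_deriv)
next
  case sub_nil
  then have "X = []" using sub_le_nil by blast
  then show ?case by (simp add: sub_le.sub_nil)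
next
  case (sub_app G1 G2 T1 T2)
  obtain X1 X2 where x: "X = X1 @ X2" "sub_le X1 G1" "sub_le X2 T1"
    using sub_split[OF sub_app.prems refl] by blast
  have "sub_le X1 G2" using sub_app.IH(1)[OF x(2)] .
  moreover have "sub_le X2 T2" using sub_app.IH(2)[OF x(3)] .
  ultimately show ?case unfolding x(1) by (rule sub_le.sub_app)
qed

lemma psi_ne: "psi A \<noteq> []"
  by (induction A) auto

lemma phi_psi: "phi (psi A) = A"
  by (induction A) (auto simp: phi_snoc psi_ne)

lemma sub_deriv_iff: "sub_le X [A] \<longleftrightarrow> deriv X A"
  using sub_le_single sub_le.sub_deriv by blast

lemma psi_mono: "tam A B \<Longrightarrow> sub_le (psi A) (psi B)"
proof (induction rule: tam.induct)
  case (tam_refl A) then show ?case by (rule sub_refl)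
next
  case (tam_trans A B C) then show ?case using sub_trans by blast
next
  case (tam_assoc A B C)
  have "sub_le [B, C] [Prod B C]"
    using sub_le.sub_deriv[OF prodR[OF ident ident, of B C]] by simp
  then have "sub_le (psi A @ [B, C]) (psi A @ [Prod B C])" by (intro sub_app sub_refl)
  then show ?case by simp
next
  case (tam_mono A1 A2 B1 B2)
  then have "sub_le [B1] [B2]" by (intro sub_le.sub_deriv tam_deriv1)
  then show ?case using tam_mono by (simp add: sub_le.sub_app)
qed

lemma psi_phi_le: "\<Theta> \<noteq> [] \<Longrightarrow> sub_le (psi (phi \<Theta>)) \<Theta>"
proof (induction \<Theta> rule: rev_induct)
  case Nil then show ?case by simp
next
  case (snoc B \<Theta>)
  show ?case
  proof (cases "\<Theta> = []")
    case True
    have "sub_le (psi B) [B]" by (intro sub_le.sub_deriv tam_deriv psi_ne) (simp add: phi_psi tam_refl)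
    then show ?thesis using True by simp
  next
    case False
    then have "sub_le (psi (phi \<Theta>) @ [B]) (\<Theta> @ [B])" using snoc by (intro sub_app sub_refl) auto
    then show ?thesis using False by (simp add: phi_snoc del: phi.simps)
  qed
qed

theorem proposition2p7:
  fixes \<Gamma> \<Theta> :: "'a fm list" and A :: "'a fm"
  assumes "\<Gamma> \<noteq> []" and "\<Theta> \<noteq> []"
  shows "(tam (phi \<Gamma>) A \<longleftrightarrow> sub_le \<Gamma> [A]) \<and> (sub_le (psi A) \<Theta> \<longleftrightarrow> tam A (phi \<Theta>))"
proof
  show "tam (phi \<Gamma>) A \<longleftrightarrow> sub_le \<Gamma> [A]"
    using assms(1) deriv_tam tam_deriv sub_deriv_iff by blast
  show "sub_le (psi A) \<Theta> \<longleftrightarrow> tam A (phi \<Theta>)"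
  proof
    assume "sub_le (psi A) \<Theta>"
    then have "deriv (psi A) (phi \<Theta>)"
      using sub_subst[of "psi A" \<Theta> "[]" "[]" "phi \<Theta>"] deriv_phi[OF assms(2)] by simp
    then show "tam A (phi \<Theta>)" using deriv_tam phi_psi by metis
  next
    assume "tam A (phi \<Theta>)"
    then show "sub_le (psi A) \<Theta>" using psi_mono psi_phi_le assms(2) sub_trans by blast
  qed
qed

end
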